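(* Let $k\ge 2$ be an integer. Every maximal (with respect to inclusion) $k$-thin subset of $\mathbb{Z}_2^\omega$ is neither Borel nor meager.
   Context: $\mathbb{Z}_2^\omega$ is the Cantor cube of infinite binary sequences indexed by $\omega=\{0,1,2,\dots\}$, with the product topology. The Hamming distance is $\mathrm{hd}(x,y)=|\{i: x(i)\ne y(i)\}|\in\omega\cup\{\omega\}$, and the minimum distance of $T\subseteq\mathbb{Z}_2^\omega$ is $\mathrm{HD}(T)=\inf\{\mathrm{hd}(x,y): x,y\in T, x\ne y\}$ (infimum of the empty set being $+\infty$). A set $T$ is $k$-thin if $\mathrm{HD}(T)\ge k$. *)

theory Defs
  imports "HOL-Analysis.Analysis" "HOL-Library.Extended_Nat"
begin

text \<open>The Cantor cube Z_2^omega is the type nat \<Rightarrow> bool, carrying the product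
  topology of discrete copies of bool (library instance of topological_space on functions).\<close>

definition hd :: "(nat \<Rightarrow> bool) \<Rightarrow> (nat \<Rightarrow> bool) \<Rightarrow> enat" where
  "hd x y = (if finite {i. x i \<noteq> y i} then enat (card {i. x i \<noteq> y i}) else \<infinity>)"

definition k_thin :: "nat \<Rightarrow> (nat \<Rightarrow> bool) set \<Rightarrow> bool" where
  "k_thin k T \<longleftrightarrow> (\<forall>x\<in>T. \<forall>y\<in>T. x \<noteq> y \<longrightarrow> enat k \<le> hd x y)"

definition maximal_k_thin :: "nat \<Rightarrow> (nat \<Rightarrow> bool) set \<Rightarrow> bool" where
  "maximal_k_thin k T \<longleftrightarrow> k_thin k T \<and> (\<forall>S. k_thin k S \<and> T \<subseteq> S \<longrightarrow> S = T)"

definition nowhere_dense :: "'a::topological_space set \<Rightarrow> bool" where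
  "nowhere_dense A \<longleftrightarrow> interior (closure A) = {}"

definition meager :: "'a::topological_space set \<Rightarrow> bool" where
  "meager A \<longleftrightarrow> (\<exists>F::nat \<Rightarrow> 'a set. (\<forall>n. nowhere_dense (F n)) \<and> A \<subseteq> (\<Union>n. F n))"

end

theory Submission
  imports Defs "HOL-Library.Nat_Bijection"
begin

definition cyl :: "(nat \<Rightarrow> bool) \<Rightarrow> nat \<Rightarrow> (nat \<Rightarrow> bool) set" where
  "cyl x n = {y. \<forall>i<n. y i = x i}"

lemma open_cyl: "open (cyl x n)"
proof -
  have eq: "cyl x n = (\<Inter>i\<in>{..<n}. (\<lambda>y. y i) -` {x i})"
    unfolding cyl_def by auto
  have h: "open ((\<lambda>y::nat\<Rightarrow>bool. y i) -` {x i})" for i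
  proof -
    have "open {x i}" by (simp add: open_discrete)
    then show ?thesis
      using continuous_on_product_coordinates[of i] open_vimage by blast
  qed
  have "open (\<Inter>i\<in>{..<n}. (\<lambda>y::nat\<Rightarrow>bool. y i) -` {x i})"
    by (rule open_INT) (simp_all add: h)
  then show ?thesis using eq by simp
qed

lemma cyl_self [simp]: "x \<in> cyl x n"
  unfolding cyl_def by auto

lemma cyl_mono: "n \<le> m \<Longrightarrow> cyl x m \<subseteq> cyl x n"
  unfolding cyl_def by auto

lemma open_contains_cyl:
  fixes U :: "(nat \<Rightarrow> bool) set"
  assumes "open U" "x \<in> U"
  shows "\<exists>n. cyl x n \<subseteq> U"
proof -
  have "openin (product_topology (\<lambda>i. euclidean) UNIV) U"
    using assms unfolding open_fun_def by auto
  from product_topology_open_contains_basis[OF this assms(2)]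
  obtain X where H0: "x \<in> (\<Pi>\<^sub>E i\<in>UNIV. X i)" "finite {i. X i \<noteq> topspace euclidean}" "(\<Pi>\<^sub>E i\<in>UNIV. X i) \<subseteq> U"
    by blast
  have H: "x \<in> (\<Pi>\<^sub>E i\<in>UNIV. X i)" "finite {i. X i \<noteq> UNIV}" "(\<Pi>\<^sub>E i\<in>UNIV. X i) \<subseteq> U"
    using H0 by simp_all
  obtain n where n0: "{i. X i \<noteq> UNIV} \<subseteq> {..<n}"
    using finite_nat_bounded[OF H(2)] by (elim exE)
  then have n: "\<forall>i\<in>{i. X i \<noteq> UNIV}. i < n" by auto
  have "cyl x n \<subseteq> (\<Pi>\<^sub>E i\<in>UNIV. X i)"
  proof
    fix y assume y: "y \<in> cyl x n"
    show "y \<in> (\<Pi>\<^sub>E i\<in>UNIV. X i)"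
    proof (simp add: PiE_def Pi_def, intro allI)
      fix i
      show "y i \<in> X i"
      proof (cases "X i = UNIV")
        case False
        then have "i < n" using n by auto
        then have "y i = x i" using y unfolding cyl_def by auto
        then show ?thesis using H(1) by auto
      qed auto
    qed
  qed
  then show ?thesis using H(3) by blast
qed

definition ndc :: "(nat \<Rightarrow> bool) set \<Rightarrow> bool" where
  "ndc F \<longleftrightarrow> (\<forall>s m. \<exists>s' m'. m < m' \<and> (\<forall>i<m. s' i = s i) \<and> cyl s' m' \<inter> F = {})"

lemma nd_imp_ndc:
  fixes F :: "(nat \<Rightarrow> bool) set"
  assumes "nowhere_dense F" shows "ndc F"
  unfolding ndc_def
proof (intro allI)
  fix s :: "nat \<Rightarrow> bool" and m :: nat
  have "\<not> cyl s m \<subseteq> closure F"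
  proof
    assume "cyl s m \<subseteq> closure F"
    then have "cyl s m \<subseteq> interior (closure F)"
      using interior_maximal open_cyl by blast
    then show False using assms cyl_self[of s m] unfolding nowhere_dense_def by blast
  qed
  then obtain y where y: "y \<in> cyl s m" "y \<notin> closure F" by auto
  have "open (cyl s m - closure F)" using open_cyl by (simp add: open_Diff)
  then obtain n where n: "cyl y n \<subseteq> cyl s m - closure F"
    using open_contains_cyl y by blast
  have "cyl y (Suc (max n m)) \<subseteq> cyl y n" by (rule cyl_mono) simp
  then have "cyl y (Suc (max n m)) \<inter> F = {}" using n closure_subset by blast
  moreover have "\<forall>i<m. y i = s i" using y(1) unfolding cyl_def by auto
  moreover have "m < Suc (max n m)" by simp
  ultimately show "\<exists>s' m'. m < m' \<and> (\<forall>i<m. s' i = s i) \<and> cyl s' m' \<inter> F = {}"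
    by blast
qed

lemma ndc_imp_nd:
  fixes F :: "(nat \<Rightarrow> bool) set"
  assumes "ndc F" shows "nowhere_dense F"
  unfolding nowhere_dense_def
proof (rule ccontr)
  assume "interior (closure F) \<noteq> {}"
  then obtain x where x: "x \<in> interior (closure F)" by auto
  obtain n where n: "cyl x n \<subseteq> interior (closure F)"
    using open_contains_cyl[OF open_interior x] by blast
  obtain s' m' where s': "n < m'" "\<forall>i<n. s' i = x i" "cyl s' m' \<inter> F = {}"
    using assms[unfolded ndc_def, rule_format, where s=x and m=n] by blast
  have "s' \<in> cyl x n" using s'(2) unfolding cyl_def by auto
  then have "s' \<in> closure F" using n interior_subset by blast
  moreover have "cyl s' m' \<inter> closure F = {}"
    using open_Int_closure_eq_empty[OF open_cyl] s'(3) by blast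
  ultimately show False using cyl_self[of s' m'] by blast
qed

lemma baire_cyl:
  fixes F :: "nat \<Rightarrow> (nat \<Rightarrow> bool) set"
  assumes "\<forall>j. ndc (F j)"
  shows "\<exists>x\<in>cyl s m. \<forall>j. x \<notin> F j"
proof -
  define Q where "Q = (\<lambda>j (s::nat\<Rightarrow>bool) (m::nat) (p::nat \<times> (nat \<Rightarrow> bool)).
     m < fst p \<and> (\<forall>i<m. snd p i = s i) \<and> cyl (snd p) (fst p) \<inter> F j = {})"
  define g where "g j s m = (SOME p. Q j s m p)" for j s m
  have g: "Q j s m (g j s m)" for j s m
  proof -
    obtain s' m' where "m < m' \<and> (\<forall>i<m. s' i = s i) \<and> cyl s' m' \<inter> F j = {}"
      using assms[rule_format, of j, unfolded ndc_def, rule_format, where s=s and m=m] by blast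
    then have "Q j s m (m', s')" unfolding Q_def by simp
    then show ?thesis unfolding g_def by (rule someI)
  qed
  define sq where "sq = rec_nat (m, s) (\<lambda>j p. g j (snd p) (fst p))"
  define M where "M j = fst (sq j)" for j
  define S where "S j = snd (sq j)" for j
  have sq0: "M 0 = m" "S 0 = s" unfolding M_def S_def sq_def by simp_all
  have sqS: "sq (Suc j) = g j (S j) (M j)" for j unfolding M_def S_def sq_def by simp
  have step: "M j < M (Suc j)" "\<forall>i<M j. S (Suc j) i = S j i" "cyl (S (Suc j)) (M (Suc j)) \<inter> F j = {}" for j
    using g[of j "S j" "M j"] unfolding Q_def M_def[of "Suc j"] S_def[of "Suc j"] sqS by auto
  have Mmono: "strict_mono M" using step(1) by (rule strict_monoI_Suc)
  have Mge: "j \<le> M j" for j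
    by (induction j) (use step(1) in \<open>auto simp: Suc_le_eq intro: le_less_trans\<close>)
  have agree: "\<forall>i<M b. S a i = S b i" if "b \<le> a" for a b
    using that
  proof (induction a rule: dec_induct)
    case base then show ?case by simp
  next
    case (step a)
    have "M b \<le> M a" using Mmono step.hyps(1) by (simp add: strict_mono_less_eq)
    then show ?case using step.IH \<open>\<forall>i<M a. S (Suc a) i = S a i\<close> by auto
  qed
  define x where "x i = S (Suc i) i" for i
  have xin: "x \<in> cyl (S j) (M j)" for j
    unfolding cyl_def
  proof (intro CollectI allI impI)
    fix i assume i: "i < M j"
    define a where "a = max j (Suc i)"
    have "S a i = S j i" using agree[of j a] i unfolding a_def by auto
    moreover have "i < M (Suc i)" using Mge[of "Suc i"] by simp
    then have "S a i = S (Suc i) i" using agree[of "Suc i" a] unfolding a_def by auto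
    ultimately show "x i = S j i" unfolding x_def by simp
  qed
  have x1: "x \<in> cyl s m" using xin[of 0] sq0 by simp
  have x2: "x \<notin> F j" for j
  proof
    assume "x \<in> F j"
    then have "x \<in> cyl (S (Suc j)) (M (Suc j)) \<inter> F j" using xin[of "Suc j"] by (rule IntI[rotated])
    then show False using step(3)[of j] by simp
  qed
  show ?thesis
  proof (rule bexI[of _ x])
    show "\<forall>j. x \<notin> F j" using x2 by (rule allI)
    show "x \<in> cyl s m" by (rule x1)
  qed
qed

lemma meager_ndc:
  assumes "meager A"
  shows "\<exists>F::nat \<Rightarrow> (nat \<Rightarrow> bool) set. (\<forall>j. ndc (F j)) \<and> A \<subseteq> (\<Union>j. F j)"
proof -
  obtain F :: "nat \<Rightarrow> (nat \<Rightarrow> bool) set" where F: "\<forall>n. nowhere_dense (F n)" "A \<subseteq> (\<Union>n. F n)"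
    using assms unfolding meager_def by (elim exE conjE)
  have "\<forall>j. ndc (F j)" using F(1) nd_imp_ndc by simp
  then show ?thesis using F(2) by (intro exI[of _ F] conjI)
qed

lemma meager_open:
  fixes U :: "(nat \<Rightarrow> bool) set"
  assumes "meager A" "open U" "U \<noteq> {}"
  shows "\<not> U \<subseteq> A"
proof
  assume sub: "U \<subseteq> A"
  obtain F :: "nat \<Rightarrow> (nat \<Rightarrow> bool) set" where F: "\<forall>j. ndc (F j)" "A \<subseteq> (\<Union>j. F j)" using meager_ndc[OF assms(1)] by blast
  obtain x where "x \<in> U" using assms(3) by auto
  then obtain n where n: "cyl x n \<subseteq> U" using open_contains_cyl assms(2) by blast
  obtain y where "y \<in> cyl x n" "\<forall>j. y \<notin> F j" using baire_cyl[OF F(1)] by blast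
  then show False using n sub F(2) by blast
qed

lemma meager_subset: "meager B \<Longrightarrow> A \<subseteq> B \<Longrightarrow> meager A"
  unfolding meager_def by blast

lemma meager_UN:
  fixes A :: "nat \<Rightarrow> 'a::topological_space set"
  assumes "\<And>n. meager (A n)"
  shows "meager (\<Union>n. A n)"
proof -
  have ex: "\<forall>n. \<exists>F::nat \<Rightarrow> 'a set. (\<forall>j. nowhere_dense (F j)) \<and> A n \<subseteq> (\<Union>j. F j)"
    using assms unfolding meager_def by blast
  obtain FF :: "nat \<Rightarrow> nat \<Rightarrow> 'a set" where FF: "\<forall>n. (\<forall>j. nowhere_dense (FF n j)) \<and> A n \<subseteq> (\<Union>j. FF n j)"
    using choice[OF ex] by (elim exE) (erule that)
  define G where "G k = (case prod_decode k of (n, j) \<Rightarrow> FF n j)" for k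
  have "nowhere_dense (G k)" for k
    using FF unfolding G_def by (auto split: prod.splits)
  moreover have "(\<Union>n. A n) \<subseteq> (\<Union>k. G k)"
  proof
    fix x assume "x \<in> (\<Union>n. A n)"
    then obtain n j where "x \<in> FF n j" using FF by blast
    then have "x \<in> G (prod_encode (n, j))" unfolding G_def by simp
    then show "x \<in> (\<Union>k. G k)" by blast
  qed
  ultimately show ?thesis unfolding meager_def by blast
qed

lemma meager_Un:
  fixes A B :: "'a::topological_space set"
  assumes "meager A" "meager B" shows "meager (A \<union> B)"
proof -
  have "A \<union> B = (\<Union>n::nat. if n = 0 then A else B)" by auto
  moreover have "meager (if n = 0 then A else B)" for n :: nat using assms by simp
  ultimately show ?thesis using meager_UN[of "\<lambda>n. if n = 0 then A else B"] by simp
qed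

lemma nd_meager: "nowhere_dense A \<Longrightarrow> meager A"
  unfolding meager_def by (rule exI[of _ "\<lambda>_. A"]) auto

definition tr :: "(nat \<Rightarrow> bool) \<Rightarrow> (nat \<Rightarrow> bool) \<Rightarrow> (nat \<Rightarrow> bool)" where
  "tr b x = (\<lambda>i. x i \<noteq> b i)"

lemma tr_tr [simp]: "tr b (tr b x) = x"
  unfolding tr_def by auto

lemma ndc_tr:
  assumes "ndc F" shows "ndc (tr b ` F)"
  unfolding ndc_def
proof (intro allI)
  fix s :: "nat \<Rightarrow> bool" and m :: nat
  obtain s' m' where s': "m < m'" "\<forall>i<m. s' i = tr b s i" "cyl s' m' \<inter> F = {}"
    using assms[unfolded ndc_def, rule_format, where s="tr b s" and m=m] by blast
  have "\<forall>i<m. tr b s' i = s i" using s'(2) unfolding tr_def by auto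
  moreover have "cyl (tr b s') m' \<inter> tr b ` F = {}"
  proof (rule ccontr)
    assume "cyl (tr b s') m' \<inter> tr b ` F \<noteq> {}"
    then obtain f where f: "f \<in> F" "tr b f \<in> cyl (tr b s') m'" by auto
    then have "f \<in> cyl s' m'" unfolding cyl_def tr_def by auto
    then show False using f(1) s'(3) by auto
  qed
  ultimately show "\<exists>s'' m''. m < m'' \<and> (\<forall>i<m. s'' i = s i) \<and> cyl s'' m'' \<inter> tr b ` F = {}"
    using s'(1) by blast
qed

lemma meager_tr:
  assumes "meager A" shows "meager (tr b ` A)"
proof -
  obtain F :: "nat \<Rightarrow> (nat \<Rightarrow> bool) set" where F: "\<forall>j. ndc (F j)" "A \<subseteq> (\<Union>j. F j)" using meager_ndc[OF assms] by blast
  have h1: "\<forall>j. nowhere_dense (tr b ` F j)" using F(1) ndc_tr ndc_imp_nd by blast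
  have h2: "tr b ` A \<subseteq> (\<Union>j. tr b ` F j)" using F(2) by blast
  show ?thesis unfolding meager_def
    by (rule exI[of _ "\<lambda>j. tr b ` F j"]) (use h1 h2 in simp)
qed

lemma closed_minus_interior:
  fixes C :: "(nat \<Rightarrow> bool) set"
  assumes "closed C" shows "nowhere_dense (C - interior C)"
proof (rule ndc_imp_nd, unfold ndc_def, intro allI)
  fix s :: "nat \<Rightarrow> bool" and m :: nat
  show "\<exists>s' m'. m < m' \<and> (\<forall>i<m. s' i = s i) \<and> cyl s' m' \<inter> (C - interior C) = {}"
  proof (cases "cyl s m \<subseteq> C")
    case True
    then have "cyl s m \<subseteq> interior C" using interior_maximal open_cyl by blast
    moreover have "cyl s (Suc m) \<subseteq> cyl s m" by (rule cyl_mono) simp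
    ultimately have "cyl s (Suc m) \<inter> (C - interior C) = {}" by blast
    then show ?thesis by (intro exI[of _ s] exI[of _ "Suc m"]) auto
  next
    case False
    then obtain y where y: "y \<in> cyl s m" "y \<notin> C" by auto
    have "open (cyl s m - C)" using open_cyl assms by (simp add: open_Diff)
    then obtain n where n: "cyl y n \<subseteq> cyl s m - C"
      using open_contains_cyl y by blast
    have "cyl y (Suc (max n m)) \<subseteq> cyl y n" by (rule cyl_mono) simp
    then have "cyl y (Suc (max n m)) \<inter> (C - interior C) = {}" using n by blast
    moreover have "\<forall>i<m. y i = s i" using y(1) unfolding cyl_def by auto
    ultimately show ?thesis by (intro exI[of _ y] exI[of _ "Suc (max n m)"]) auto
  qed
qed

definition bp :: "(nat \<Rightarrow> bool) set \<Rightarrow> bool" where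
  "bp A \<longleftrightarrow> (\<exists>U. open U \<and> meager ((A - U) \<union> (U - A)))"

lemma borel_bp:
  assumes "A \<in> sets borel" shows "bp A"
proof -
  have "A \<in> sigma_sets UNIV {S. open S}" using assms by (simp add: sets_borel)
  then show ?thesis
  proof (induction rule: sigma_sets.induct)
    case (Basic a)
    then show ?case unfolding bp_def
      by (intro exI[of _ a]) (auto intro: nd_meager simp: nowhere_dense_def)
  next
    case Empty
    then show ?case unfolding bp_def
      by (intro exI[of _ "{}"]) (auto intro: nd_meager simp: nowhere_dense_def)
  next
    case (Compl a)
    then obtain U where U: "open U" "meager ((a - U) \<union> (U - a))" unfolding bp_def by blast
    define V where "V = interior (- U)"
    have "meager (- U - interior (- U))"
      using closed_minus_interior[of "- U"] U(1) nd_meager by auto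
    then have m: "meager (((a - U) \<union> (U - a)) \<union> (- U - interior (- U)))"
      using U(2) meager_Un by blast
    have "((UNIV - a) - V) \<union> (V - (UNIV - a)) \<subseteq> ((a - U) \<union> (U - a)) \<union> (- U - interior (- U))"
      unfolding V_def using interior_subset[of "- U"] by blast
    then show ?case unfolding bp_def V_def using m meager_subset by blast
  next
    case (Union a)
    then have ex: "\<forall>i. \<exists>U. open U \<and> meager ((a i - U) \<union> (U - a i))" unfolding bp_def by blast
    obtain U where U: "\<forall>i. open (U i) \<and> meager ((a i - U i) \<union> (U i - a i))"
      using choice[OF ex] by (elim exE) (erule that)
    have "open (\<Union>i. U i)" using U by auto
    moreover have "meager (\<Union>i. (a i - U i) \<union> (U i - a i))" by (rule meager_UN) (use U in blast)
    moreover have "((\<Union>i. a i) - (\<Union>i. U i)) \<union> ((\<Union>i. U i) - (\<Union>i. a i)) \<subseteq> (\<Union>i. (a i - U i) \<union> (U i - a i))"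
      by blast
    ultimately show ?case unfolding bp_def using meager_subset by blast
  qed
qed

theorem proposition18:
  fixes k :: nat and T :: "(nat \<Rightarrow> bool) set"
  assumes "k \<ge> 2" and "maximal_k_thin k T"
  shows "T \<notin> sets borel \<and> \<not> meager T"
proof -
  have thin: "k_thin k T" and maxi: "\<And>S. k_thin k S \<Longrightarrow> T \<subseteq> S \<Longrightarrow> S = T"
    using assms(2) unfolding maximal_k_thin_def by auto
  have cover: "\<exists>t\<in>T. finite {i. x i \<noteq> t i}" for x
  proof (cases "x \<in> T")
    case True then show ?thesis by (intro bexI[of _ x]) auto
  next
    case False
    have "\<not> k_thin k (insert x T)" using maxi[of "insert x T"] False by auto
    then obtain a b where ab: "a \<in> insert x T" "b \<in> insert x T" "a \<noteq> b" "\<not> enat k \<le> hd a b"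
      unfolding k_thin_def by blast
    have fin: "finite {i. a i \<noteq> b i}"
      using ab(4) unfolding hd_def by (auto split: if_splits)
    show ?thesis
    proof (cases "a = x")
      case True
      then have "b \<in> T" using ab by auto
      then show ?thesis using fin True by blast
    next
      case False
      then have aT: "a \<in> T" using ab by auto
      have "b = x" using ab aT thin unfolding k_thin_def by auto
      moreover have "{i. b i \<noteq> a i} = {i. a i \<noteq> b i}" by auto
      ultimately have "finite {i. x i \<noteq> a i}" using fin by simp
      then show ?thesis using aT by (intro bexI[of _ a])
    qed
  qed
  have UNIVcov: "UNIV \<subseteq> (\<Union>c. tr (\<lambda>i. i \<in> set_decode c) ` T)"
  proof
    fix x :: "nat \<Rightarrow> bool"
    obtain t where t: "t \<in> T" "finite {i. x i \<noteq> t i}" using cover by blast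
    define D where "D = {i. x i \<noteq> t i}"
    have "tr (\<lambda>i. i \<in> set_decode (set_encode D)) t = x"
      using t(2) unfolding D_def tr_def by auto
    then show "x \<in> (\<Union>c. tr (\<lambda>i. i \<in> set_decode c) ` T)" using t(1) by blast
  qed
  have notmeager: "\<not> meager T"
  proof
    assume "meager T"
    then have "meager (\<Union>c. tr (\<lambda>i. i \<in> set_decode c) ` T)"
      by (intro meager_UN meager_tr)
    then have "meager (UNIV :: (nat \<Rightarrow> bool) set)" using UNIVcov meager_subset by blast
    then show False using meager_open[of UNIV UNIV] by auto
  qed
  have notborel: "T \<notin> sets borel"
  proof
    assume "T \<in> sets borel"
    then obtain U where U: "open U" "meager ((T - U) \<union> (U - T))" using borel_bp bp_def by blast
    define M where "M = (T - U) \<union> (U - T)"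
    have "U \<noteq> {}"
    proof
      assume "U = {}"
      then have "T \<subseteq> M" unfolding M_def by auto
      then show False using notmeager U(2) meager_subset M_def by blast
    qed
    then obtain x0 where "x0 \<in> U" by auto
    then obtain n where n: "cyl x0 n \<subseteq> U" using open_contains_cyl U(1) by blast
    define \<sigma> where "\<sigma> = tr (\<lambda>j. j = n)"
    have "meager (M \<union> \<sigma> ` M)" unfolding \<sigma>_def M_def using U(2) meager_tr meager_Un by blast
    then have "\<not> cyl x0 n \<subseteq> M \<union> \<sigma> ` M" using meager_open[OF _ open_cyl] cyl_self[of x0 n] by blast
    then obtain y where y: "y \<in> cyl x0 n" "y \<notin> M" "y \<notin> \<sigma> ` M" by blast
    have yT: "y \<in> T" using y n unfolding M_def by blast
    have sy: "\<sigma> y \<in> cyl x0 n" using y(1) unfolding \<sigma>_def tr_def cyl_def by auto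
    have "\<sigma> y \<notin> M"
    proof
      assume "\<sigma> y \<in> M"
      then have "\<sigma> (\<sigma> y) \<in> \<sigma> ` M" by blast
      then show False using y(3) unfolding \<sigma>_def by simp
    qed
    then have syT: "\<sigma> y \<in> T" using sy n unfolding M_def by blast
    have D: "{i. y i \<noteq> \<sigma> y i} = {n}" unfolding \<sigma>_def tr_def by auto
    then have ne: "y \<noteq> \<sigma> y" by auto
    have "hd y (\<sigma> y) = enat 1" unfolding hd_def D by simp
    moreover have "enat k \<le> hd y (\<sigma> y)" using thin yT syT ne unfolding k_thin_def by blast
    ultimately have "enat k \<le> enat 1" by simp
    then show False using assms(1) by simp
  qed
  show ?thesis using notborel notmeager by blast
qed

end
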